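(* For all $\theta\ge0$, $a\ge0$, $b\ge0$ with $ab<1$, the map $(\varphi,f)\mapsto\varphi(\Delta_\theta)f$ is a continuous bilinear map from $\mathcal{A}_a\times\mathcal{A}_b$ into $\mathcal{A}_c$, where $c=b(1-ab)^{-1}$.
   Context: For $b>0$ and entire $f$, $\|f\|_b=\sup_{k\in\mathbb{N}_0}b^{-k}|f^{(k)}(0)|$; for $a\ge0$, $\mathcal{A}_a=\{f\text{ entire}:\|f\|_b<\infty\ \forall b>a\}$ with the locally convex topology generated by the norms $\{\|\cdot\|_b:b>a\}$. $\Delta_\theta f=\theta f'+zf''$, and $\varphi(\Delta_\theta)f=\sum_{k\ge0}\sum_{m\ge0}\frac{\varphi^{(k)}(0)}{k!}\frac{f^{(m)}(0)}{m!}\Delta_\theta^kz^m$. *)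

theory Defs
  imports "HOL-Analysis.Analysis"
begin

definition dz :: "nat \<Rightarrow> (complex \<Rightarrow> complex) \<Rightarrow> complex" where
  "dz k f = (deriv ^^ k) f 0"

text \<open>The norm \<open>\<parallel>f\<parallel>_b = sup_k b^{-k} |f^{(k)}(0)|\<close> (used for b > 0 only).\<close>
definition enorm :: "real \<Rightarrow> (complex \<Rightarrow> complex) \<Rightarrow> real" where
  "enorm b f = (SUP k. cmod (dz k f) / b ^ k)"

definition Aspace :: "real \<Rightarrow> (complex \<Rightarrow> complex) set" where
  "Aspace a = {f. f holomorphic_on UNIV \<and>
      (\<forall>b>a. bdd_above (range (\<lambda>k. cmod (dz k f) / b ^ k)))}"

text \<open>The locally convex topology on \<open>A_a\<close> generated by the norms \<open>\<parallel>.\<parallel>_b\<close>, b > a: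
  U is open iff around each of its points it contains a ball of some norm \<open>\<parallel>.\<parallel>_b\<close>
  (the family of norms is directed, so these balls form a neighbourhood base).\<close>
definition Atop :: "real \<Rightarrow> (complex \<Rightarrow> complex) topology" where
  "Atop a = topology (\<lambda>U. U \<subseteq> Aspace a \<and>
      (\<forall>f\<in>U. \<exists>b>a. \<exists>r>0. {g \<in> Aspace a. enorm b (g - f) < r} \<subseteq> U))"

definition Delta :: "real \<Rightarrow> (complex \<Rightarrow> complex) \<Rightarrow> (complex \<Rightarrow> complex)" where
  "Delta \<theta> f = (\<lambda>z. complex_of_real \<theta> * deriv f z + z * deriv (deriv f) z)"

definition opterm :: "real \<Rightarrow> (complex \<Rightarrow> complex) \<Rightarrow> (complex \<Rightarrow> complex) \<Rightarrow> complex
    \<Rightarrow> nat \<Rightarrow> nat \<Rightarrow> complex" where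
  "opterm \<theta> \<phi> f z k m = (dz k \<phi> / fact k) * (dz m f / fact m) * ((Delta \<theta> ^^ k) (\<lambda>w. w ^ m)) z"

definition opphi :: "real \<Rightarrow> (complex \<Rightarrow> complex) \<Rightarrow> (complex \<Rightarrow> complex) \<Rightarrow> (complex \<Rightarrow> complex)" where
  "opphi \<theta> \<phi> f = (\<lambda>z. \<Sum>k. \<Sum>m. opterm \<theta> \<phi> f z k m)"

end

theory Submission
  imports Defs "HOL-Complex_Analysis.Complex_Analysis"
begin

definition qf :: "real \<Rightarrow> nat \<Rightarrow> real" where
  "qf \<theta> i = real i * (real i - 1 + \<theta>)"

definition Pk :: "real \<Rightarrow> nat \<Rightarrow> nat \<Rightarrow> real" where
  "Pk \<theta> m k = (\<Prod>j<k. qf \<theta> (m - j))"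

lemma deriv_monom: "deriv (\<lambda>z::complex. c * z ^ n) = (\<lambda>z. c * (of_nat n * z ^ (n - 1)))"
proof
  fix z :: complex
  show "deriv (\<lambda>z. c * z ^ n) z = c * (of_nat n * z ^ (n - 1))"
    by (rule DERIV_imp_deriv) (auto intro!: derivative_eq_intros)
qed

lemma Delta_monom:
  "Delta \<theta> (\<lambda>z. c * z ^ n) = (\<lambda>z. c * of_real (qf \<theta> n) * z ^ (n - 1))"
proof
  fix z :: complex
  have d1: "deriv (\<lambda>z. c * z ^ n) = (\<lambda>z. (c * of_nat n) * z ^ (n - 1))"
    by (simp add: deriv_monom mult.assoc)
  have d2: "deriv (deriv (\<lambda>z. c * z ^ n)) = (\<lambda>z. (c * of_nat n) * (of_nat (n - 1) * z ^ (n - 1 - 1)))"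
    unfolding d1 deriv_monom ..
  show "Delta \<theta> (\<lambda>z. c * z ^ n) z = c * of_real (qf \<theta> n) * z ^ (n - 1)"
  proof (cases "n \<ge> 2")
    case True
    then obtain p where p: "n = Suc (Suc p)" by (metis add_2_eq_Suc le_Suc_ex)
    have e: "n - 1 = Suc p" "n - 1 - 1 = p" using p by auto
    show ?thesis unfolding Delta_def d2 unfolding d1 qf_def e
      by (simp add: p algebra_simps)
  next
    case False
    then have "n = 0 \<or> n = 1" by auto
    then show ?thesis unfolding Delta_def d2 unfolding d1 qf_def
      by (auto simp: algebra_simps)
  qed
qed

lemma Delta_pow: "(Delta \<theta> ^^ k) (\<lambda>w. w ^ m) = (\<lambda>z. of_real (Pk \<theta> m k) * z ^ (m - k))"
proof (induction k)
  case 0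
  then show ?case by (simp add: Pk_def)
next
  case (Suc k)
  have "(Delta \<theta> ^^ Suc k) (\<lambda>w. w ^ m) = Delta \<theta> (\<lambda>z. of_real (Pk \<theta> m k) * z ^ (m - k))"
    using Suc by simp
  also have "\<dots> = (\<lambda>z. of_real (Pk \<theta> m (Suc k)) * z ^ (m - Suc k))"
    unfolding Delta_monom by (simp add: Pk_def)
  finally show ?case .
qed

lemma Pk_zero: "m < k \<Longrightarrow> Pk \<theta> m k = 0"
  unfolding Pk_def by (rule prod_zero) (auto simp: qf_def intro!: bexI[of _ m])

lemma poch_binom_bound:
  assumes "0 < y" "y < (1::real)"
  shows "pochhammer (real N + 1) k \<le> fact k * (1/y)^k * (1/(1-y))^N"
proof -
  have cb: "real ((N+k) choose k) = pochhammer (real N + 1) k / fact k"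
    by (simp add: binomial_gbinomial gbinomial_pochhammer')
  have "real ((N+k) choose k) * y^k * (1-y)^(N+k-k) \<le> (\<Sum>i\<le>N+k. real ((N+k) choose i) * y^i * (1-y)^(N+k-i))"
    by (rule member_le_sum[where f="\<lambda>i. real ((N+k) choose i) * y^i * (1-y)^(N+k-i)"]) (use assms in auto)
  also have "\<dots> = (y + (1-y))^(N+k)" by (rule binomial_ring[symmetric])
  finally have le1: "real ((N+k) choose k) * (y^k * (1-y)^N) \<le> 1" by (simp add: mult.assoc)
  have pos: "0 < y^k * (1-y)^N" using assms by simp
  have "real ((N+k) choose k) \<le> 1 / (y^k * (1-y)^N)"
    using le1 pos by (simp add: pos_le_divide_eq)
  then have "pochhammer (real N + 1) k / fact k \<le> 1 / (y^k * (1-y)^N)" by (simp add: cb)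
  then have "pochhammer (real N + 1) k \<le> fact k * (1 / (y^k * (1-y)^N))"
    by (simp add: divide_le_eq mult.commute)
  also have "\<dots> = fact k * (1/y)^k * (1/(1-y))^N" by (simp add: power_one_over)
  finally show ?thesis .
qed

lemma Pk_shift: "Pk \<theta> (n+k) k = (\<Prod>i<k. qf \<theta> (n + 1 + i))"
proof -
  have "Pk \<theta> (n+k) k = (\<Prod>i<k. (\<lambda>i. qf \<theta> (n + 1 + i)) (k - Suc i))"
    unfolding Pk_def by (rule prod.cong) (auto intro: arg_cong[where f="qf \<theta>"])
  also have "\<dots> = (\<Prod>i<k. qf \<theta> (n + 1 + i))" by (rule prod.nat_diff_reindex)
  finally show ?thesis .
qed

lemma Pk_bound:
  assumes "\<theta> \<ge> 0" "\<theta> \<le> real T"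
  shows "0 \<le> Pk \<theta> (n+k) k \<and> Pk \<theta> (n+k) k \<le> pochhammer (real n + 1) k * pochhammer (real (n+T) + 1) k"
proof -
  have P: "pochhammer (real n + 1) k * pochhammer (real (n+T) + 1) k
     = (\<Prod>i<k. (real n + 1 + real i) * (real (n+T) + 1 + real i))"
    by (simp add: pochhammer_prod atLeast0LessThan prod.distrib)
  have "0 \<le> (\<Prod>i<k. qf \<theta> (n + 1 + i))"
    by (rule prod_nonneg) (use assms in \<open>auto simp: qf_def\<close>)
  moreover have "(\<Prod>i<k. qf \<theta> (n + 1 + i)) \<le> (\<Prod>i<k. (real n + 1 + real i) * (real (n+T) + 1 + real i))"
  proof (rule prod_mono)
    fix i assume "i \<in> {..<k}"
    show "0 \<le> qf \<theta> (n + 1 + i) \<and> qf \<theta> (n + 1 + i) \<le> (real n + 1 + real i) * (real (n+T) + 1 + real i)"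
    proof
      show "0 \<le> qf \<theta> (n + 1 + i)" using assms by (auto simp: qf_def)
      have "real (n + 1 + i) - 1 + \<theta> \<le> real (n+T) + 1 + real i" using assms by simp
      then show "qf \<theta> (n + 1 + i) \<le> (real n + 1 + real i) * (real (n+T) + 1 + real i)"
        unfolding qf_def using assms by (intro mult_mono) auto
    qed
  qed
  ultimately show ?thesis unfolding Pk_shift P by simp
qed

definition coef :: "real \<Rightarrow> (complex \<Rightarrow> complex) \<Rightarrow> (complex \<Rightarrow> complex) \<Rightarrow> nat \<Rightarrow> nat \<Rightarrow> complex" where
  "coef \<theta> \<phi> f k n = dz k \<phi> / fact k * (dz (n+k) f / fact (n+k)) * of_real (Pk \<theta> (n+k) k)"

lemma opterm_shift: "opterm \<theta> \<phi> f z k (n+k) = coef \<theta> \<phi> f k n * z^n"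
  unfolding opterm_def coef_def Delta_pow by simp

lemma opterm_low: "m < k \<Longrightarrow> opterm \<theta> \<phi> f z k m = 0"
  unfolding opterm_def Delta_pow by (simp add: Pk_zero)

lemma fact_split: "(fact (n+k) :: real) = fact n * pochhammer (real n + 1) k"
  unfolding pochhammer_fact pochhammer_product' by (simp add: add_ac)

lemma coef_bound:
  assumes th: "\<theta> \<ge> 0" "\<theta> \<le> real T" and y: "0 < y" "y < 1"
    and AB: "A \<ge> 0" "B \<ge> 0" "a' \<ge> 0" "b' \<ge> 0"
    and hphi: "\<And>k. norm (dz k \<phi>) \<le> A * a'^k" and hf: "\<And>m. norm (dz m f) \<le> B * b'^m"
  shows "norm (coef \<theta> \<phi> f k n) \<le> A*B*(1/(1-y))^T * (a'*b'/y)^k * ((b'/(1-y))^n / fact n)"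
proof -
  define p1 where "p1 = pochhammer (real n + 1) k"
  define p2 where "p2 = pochhammer (real (n+T) + 1) k"
  have p1pos: "p1 > 0" unfolding p1_def by (intro pochhammer_pos) auto
  have Pk: "0 \<le> Pk \<theta> (n+k) k" "Pk \<theta> (n+k) k \<le> p1 * p2"
    using Pk_bound[OF th, of n k] unfolding p1_def p2_def by auto
  have p2: "p2 \<le> fact k * (1/y)^k * (1/(1-y))^(n+T)"
    unfolding p2_def by (rule poch_binom_bound[OF y])
  have "norm (coef \<theta> \<phi> f k n) = norm (dz k \<phi>) / fact k * (norm (dz (n+k) f) / fact (n+k)) * Pk \<theta> (n+k) k"
    unfolding coef_def using Pk(1) by (simp add: norm_mult norm_divide)
  also have "\<dots> \<le> (A * a'^k) / fact k * ((B * b'^(n+k)) / fact (n+k)) * (p1 * p2)"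
    using AB Pk hphi hf
    by (intro mult_mono divide_right_mono) (auto intro!: mult_nonneg_nonneg divide_nonneg_nonneg)
  also have "\<dots> = A * B * a'^k * b'^(n+k) * (p2 / fact k) / fact n"
    unfolding fact_split p1_def[symmetric] using p1pos by (simp add: field_simps)
  also have "\<dots> \<le> A * B * a'^k * b'^(n+k) * ((1/y)^k * (1/(1-y))^(n+T)) / fact n"
    using p2 AB by (intro divide_right_mono mult_left_mono) (auto simp: field_simps)
  also have "\<dots> = A*B*(1/(1-y))^T * (a'*b'/y)^k * ((b'/(1-y))^n / fact n)"
    by (simp add: power_add power_mult_distrib field_simps)
  finally show ?thesis .
qed

locale bsetting =
  fixes \<theta> :: real and \<phi> f :: "complex \<Rightarrow> complex" and A B a' b' y :: real and T :: nat
  assumes th: "\<theta> \<ge> 0" "\<theta> \<le> real T" and y: "0 < y" "y < 1"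
    and AB: "A \<ge> 0" "B \<ge> 0" "a' \<ge> 0" "b' \<ge> 0" and aby: "a' * b' < y"
    and hphi: "\<And>k. norm (dz k \<phi>) \<le> A * a'^k" and hf: "\<And>m. norm (dz m f) \<le> B * b'^m"
begin

definition "u = a' * b' / y"
definition "v = b' / (1 - y)"
definition "K0 = A*B*(1/(1-y))^T"

lemma u: "0 \<le> u" "u < 1" unfolding u_def using AB y aby by (auto simp: field_simps)
lemma v: "0 \<le> v" unfolding v_def using AB y by auto
lemma K0: "0 \<le> K0" unfolding K0_def using AB y by auto

lemma cbound: "norm (coef \<theta> \<phi> f k n) \<le> K0 * u^k * (v^n / fact n)"
  using coef_bound[OF th y AB hphi hf] unfolding K0_def u_def v_def .

lemma tbound: "norm (coef \<theta> \<phi> f k n * z^n) \<le> K0 * u^k * ((v * norm z)^n / fact n)"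
proof -
  have "norm (coef \<theta> \<phi> f k n * z^n) = norm (coef \<theta> \<phi> f k n) * norm z ^ n"
    by (simp add: norm_mult norm_power)
  also have "\<dots> \<le> K0 * u^k * (v^n / fact n) * norm z ^ n"
    by (intro mult_right_mono cbound) auto
  also have "\<dots> = K0 * u^k * ((v * norm z)^n / fact n)" by (simp add: power_mult_distrib)
  finally show ?thesis .
qed

lemma summable_expo: "summable (\<lambda>n. (x::real)^n / fact n)"
  using summable_exp[of x] by (simp add: field_simps)

lemma bd_summable:
  assumes r: "r \<ge> 0"
  shows "(\<lambda>(k,n). K0 * u^k * ((v * r)^n / fact n)) summable_on UNIV"
proof -
  define E where "E = (\<Sum>n. (v * r)^n / fact n)"
  have "(\<lambda>(k,n). K0 * u^k * ((v * r)^n / fact n)) summable_on Sigma UNIV (\<lambda>_. UNIV)"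
  proof (rule summable_on_SigmaI[where g="\<lambda>k. K0 * u^k * E"])
    fix k :: nat
    have "(\<lambda>n. K0 * u^k * ((v * r)^n / fact n)) sums (K0 * u^k * E)"
      unfolding E_def by (intro sums_mult summable_sums summable_expo)
    then show "((\<lambda>n. (\<lambda>(k,n). K0 * u^k * ((v * r)^n / fact n)) (k, n)) has_sum K0 * u^k * E) UNIV"
      using K0 u v r by (auto intro!: sums_nonneg_imp_has_sum)
  next
    have "E \<ge> 0" unfolding E_def using v r by (intro suminf_nonneg summable_expo) auto
    then have "summable (\<lambda>k. K0 * u^k * E)"
      using u by (intro summable_mult2 summable_mult summable_geometric) auto
    then show "(\<lambda>k. K0 * u^k * E) summable_on UNIV"
      using K0 u \<open>E \<ge> 0\<close> by (subst summable_on_UNIV_nonneg_real_iff) auto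
  next
    fix k n :: nat
    show "0 \<le> (case (k, n) of (k, n) \<Rightarrow> K0 * u ^ k * ((v * r) ^ n / fact n))"
      using K0 u v r by auto
  qed
  then show ?thesis by simp
qed

lemma pair_summable: "(\<lambda>(k,n). coef \<theta> \<phi> f k n * z^n) summable_on UNIV"
proof -
  have "(\<lambda>x. norm ((\<lambda>(k,n). coef \<theta> \<phi> f k n * z^n) x)) summable_on UNIV"
    by (rule Infinite_Sum.abs_summable_on_comparison_test'[OF bd_summable[of "norm z"]]) (use tbound in auto)
  then show ?thesis by (simp add: summable_on_iff_abs_summable_on_complex)
qed

lemma row_summable: "summable (\<lambda>n. coef \<theta> \<phi> f k n * z^n)"
  and row_norm_summable: "summable (\<lambda>n. norm (coef \<theta> \<phi> f k n * z^n))"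
proof -
  have s: "summable (\<lambda>n. K0 * u^k * ((v * norm z)^n / fact n))"
    by (intro summable_mult summable_expo)
  show "summable (\<lambda>n. norm (coef \<theta> \<phi> f k n * z^n))"
    by (rule summable_comparison_test'[OF s]) (use tbound[of k _ z] in simp)
  then show "summable (\<lambda>n. coef \<theta> \<phi> f k n * z^n)" by (rule summable_norm_cancel)
qed

lemma opterm_summable: "summable (\<lambda>m. opterm \<theta> \<phi> f z k m)"
proof -
  have "summable (\<lambda>n. opterm \<theta> \<phi> f z k (n+k))"
    unfolding opterm_shift by (rule row_summable)
  then show ?thesis by simp
qed

lemma opterm_suminf: "(\<Sum>m. opterm \<theta> \<phi> f z k m) = infsum (\<lambda>n. coef \<theta> \<phi> f k n * z^n) UNIV"
proof -
  have "(\<lambda>n. coef \<theta> \<phi> f k n * z^n) sums (\<Sum>n. coef \<theta> \<phi> f k n * z^n)"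
    by (rule summable_sums[OF row_summable])
  then have "(\<lambda>n. opterm \<theta> \<phi> f z k (n+k)) sums (\<Sum>n. coef \<theta> \<phi> f k n * z^n)"
    unfolding opterm_shift .
  then have "(\<lambda>m. opterm \<theta> \<phi> f z k m) sums (\<Sum>n. coef \<theta> \<phi> f k n * z^n)"
    by (subst (asm) sums_zero_iff_shift) (auto simp: opterm_low)
  then have "(\<Sum>m. opterm \<theta> \<phi> f z k m) = (\<Sum>n. coef \<theta> \<phi> f k n * z^n)" by (rule sums_unique[symmetric])
  also have "\<dots> = infsum (\<lambda>n. coef \<theta> \<phi> f k n * z^n) UNIV"
    by (rule infsumI[symmetric], rule norm_summable_imp_has_sum[OF row_norm_summable summable_sums[OF row_summable]])
  finally show ?thesis .
qed

lemma outer_summable_on: "(\<lambda>k. infsum (\<lambda>n. coef \<theta> \<phi> f k n * z^n) UNIV) summable_on UNIV"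
  using summable_on_Sigma_banach[of "\<lambda>k n. coef \<theta> \<phi> f k n * z^n" UNIV "\<lambda>_. UNIV"] pair_summable
  by simp

lemma outer_norm_summable: "summable (\<lambda>k. norm (infsum (\<lambda>n. coef \<theta> \<phi> f k n * z^n) UNIV))"
proof -
  have "(\<lambda>k. norm (infsum (\<lambda>n. coef \<theta> \<phi> f k n * z^n) UNIV)) summable_on UNIV"
    using outer_summable_on by (simp add: summable_on_iff_abs_summable_on_complex)
  then show ?thesis by (subst (asm) summable_on_UNIV_nonneg_real_iff) auto
qed

lemma outer_summable: "summable (\<lambda>k. \<Sum>m. opterm \<theta> \<phi> f z k m)"
  unfolding opterm_suminf by (rule summable_norm_cancel[OF outer_norm_summable])

definition "cc n = infsum (\<lambda>k. coef \<theta> \<phi> f k n) UNIV"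

lemma cc_bound: "norm (cc n) \<le> K0 / (1 - u) * (v^n / fact n)"
proof -
  have g: "(\<lambda>k. K0 * u^k * (v^n / fact n)) sums (K0 * (1 / (1 - u)) * (v^n / fact n))"
    using u by (intro sums_mult2 sums_mult geometric_sums) auto
  have gs: "((\<lambda>k. K0 * u^k * (v^n / fact n)) has_sum (K0 * (1 / (1 - u)) * (v^n / fact n))) UNIV"
    using K0 u v by (intro sums_nonneg_imp_has_sum[OF g]) auto
  have "(\<lambda>k. norm (coef \<theta> \<phi> f k n)) summable_on UNIV"
    by (rule Infinite_Sum.abs_summable_on_comparison_test'[OF has_sum_imp_summable[OF gs]]) (rule cbound)
  then have "(\<lambda>k. coef \<theta> \<phi> f k n) summable_on UNIV"
    by (simp add: summable_on_iff_abs_summable_on_complex)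
  then have "norm (cc n) \<le> K0 * (1 / (1 - u)) * (v^n / fact n)"
    unfolding cc_def by (intro norm_infsum_le[OF has_sum_infsum gs] cbound)
  then show ?thesis by simp
qed

lemma cc_summable: "summable (\<lambda>n. norm (cc n * z^n))"
proof -
  have s: "summable (\<lambda>n. K0 / (1 - u) * ((v * norm z)^n / fact n))"
    by (intro summable_mult summable_expo)
  show ?thesis
  proof (rule summable_comparison_test'[OF s])
    fix n :: nat
    have "norm (cc n * z^n) = norm (cc n) * norm z ^ n" by (simp add: norm_mult norm_power)
    also have "\<dots> \<le> K0 / (1 - u) * (v^n / fact n) * norm z ^ n"
      by (intro mult_right_mono cc_bound) auto
    also have "\<dots> = K0 / (1 - u) * ((v * norm z)^n / fact n)" by (simp add: power_mult_distrib)
    finally show "norm (norm (cc n * z^n)) \<le> K0 / (1 - u) * ((v * norm z)^n / fact n)" by simp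
  qed
qed

lemma opphi_eq: "opphi \<theta> \<phi> f z = (\<Sum>n. cc n * z^n)"
proof -
  have "opphi \<theta> \<phi> f z = (\<Sum>k. infsum (\<lambda>n. coef \<theta> \<phi> f k n * z^n) UNIV)"
    unfolding opphi_def opterm_suminf ..
  also have "\<dots> = infsum (\<lambda>k. infsum (\<lambda>n. coef \<theta> \<phi> f k n * z^n) UNIV) UNIV"
    by (rule infsumI[symmetric], rule norm_summable_imp_has_sum[OF outer_norm_summable
          summable_sums[OF summable_norm_cancel[OF outer_norm_summable]]])
  also have "\<dots> = infsum (\<lambda>n. infsum (\<lambda>k. coef \<theta> \<phi> f k n * z^n) UNIV) UNIV"
    by (rule infsum_swap_banach) (use pair_summable in simp)
  also have "\<dots> = infsum (\<lambda>n. cc n * z^n) UNIV"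
    unfolding cc_def by (simp add: infsum_cmult_left')
  also have "\<dots> = (\<Sum>n. cc n * z^n)"
    by (rule infsumI, rule norm_summable_imp_has_sum[OF cc_summable
          summable_sums[OF summable_norm_cancel[OF cc_summable]]])
  finally show ?thesis .
qed

lemma conv_inf: "fps_conv_radius (Abs_fps cc) = \<infinity>"
  unfolding fps_conv_radius_def
  by (rule conv_radius_inftyI'') (use summable_norm_cancel[OF cc_summable] in simp)

lemma opphi_fps: "opphi \<theta> \<phi> f = eval_fps (Abs_fps cc)"
  by (rule ext) (simp add: opphi_eq eval_fps_def)

lemma opphi_holo: "opphi \<theta> \<phi> f holomorphic_on UNIV"
  unfolding opphi_fps by (rule holomorphic_on_eval_fps) (simp add: conv_inf)

lemma dz_opphi: "dz n (opphi \<theta> \<phi> f) = fact n * cc n"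
proof -
  have "eval_fps (Abs_fps cc) has_fps_expansion Abs_fps cc"
    by (rule eval_fps_has_fps_expansion) (simp add: conv_inf)
  from fps_nth_fps_expansion[OF this, of n] show ?thesis
    unfolding dz_def opphi_fps by simp
qed

lemma dz_opphi_bound: "norm (dz n (opphi \<theta> \<phi> f)) \<le> K0 / (1 - u) * v^n"
proof -
  have "norm (dz n (opphi \<theta> \<phi> f)) = fact n * norm (cc n)" by (simp add: dz_opphi norm_mult)
  also have "\<dots> \<le> fact n * (K0 / (1 - u) * (v^n / fact n))"
    by (intro mult_left_mono cc_bound) auto
  also have "\<dots> = K0 / (1 - u) * v^n" by simp
  finally show ?thesis .
qed

end

lemma Aspace_holo: "f \<in> Aspace a \<Longrightarrow> f holomorphic_on UNIV"
  unfolding Aspace_def by auto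

lemma Aspace_bdd: "f \<in> Aspace a \<Longrightarrow> b > a \<Longrightarrow> bdd_above (range (\<lambda>k. cmod (dz k f) / b ^ k))"
  unfolding Aspace_def by auto

lemma dz_le:
  assumes "f \<in> Aspace a" "b > a" "b > 0"
  shows "norm (dz k f) \<le> enorm b f * b^k"
proof -
  have "cmod (dz k f) / b ^ k \<le> enorm b f"
    unfolding enorm_def by (rule cSUP_upper[OF _ Aspace_bdd[OF assms(1,2)]]) auto
  then show ?thesis using assms(3) by (simp add: divide_le_eq)
qed

lemma enorm_nonneg:
  assumes "f \<in> Aspace a" "b > a" "b > 0"
  shows "0 \<le> enorm b f"
proof -
  have "cmod (dz 0 f) / b ^ 0 \<le> enorm b f"
    unfolding enorm_def by (rule cSUP_upper[OF _ Aspace_bdd[OF assms(1,2)]]) auto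
  moreover have "0 \<le> cmod (dz 0 f) / b ^ 0" by simp
  ultimately show ?thesis by linarith
qed

lemma enorm_le:
  assumes "\<And>k. norm (dz k f) \<le> M * b^k" "b > 0"
  shows "enorm b f \<le> M"
  unfolding enorm_def
proof (rule cSUP_least)
  fix k
  show "cmod (dz k f) / b ^ k \<le> M" using assms(1)[of k] assms(2) by (simp add: divide_le_eq)
qed auto

lemma dz_lin:
  assumes "f holomorphic_on UNIV" "g holomorphic_on UNIV"
  shows "dz k (\<lambda>z. \<alpha> * f z + \<beta> * g z) = \<alpha> * dz k f + \<beta> * dz k g"
proof -
  have h1: "(\<lambda>z. \<alpha> * f z) holomorphic_on UNIV" "(\<lambda>z. \<beta> * g z) holomorphic_on UNIV"
    using assms by (auto intro!: holomorphic_intros)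
  show ?thesis unfolding dz_def
    using higher_deriv_add[OF h1 open_UNIV, of 0 k] higher_deriv_cmult[OF assms(1) _ open_UNIV, of 0 k \<alpha>]
      higher_deriv_cmult[OF assms(2) _ open_UNIV, of 0 k \<beta>] by simp
qed

lemma Aspace_lin:
  assumes "f \<in> Aspace a" "g \<in> Aspace a" "a \<ge> 0"
  shows "(\<lambda>z. \<alpha> * f z + \<beta> * g z) \<in> Aspace a"
  unfolding Aspace_def
proof (intro CollectI conjI allI impI)
  show "(\<lambda>z. \<alpha> * f z + \<beta> * g z) holomorphic_on UNIV"
    using Aspace_holo[OF assms(1)] Aspace_holo[OF assms(2)] by (auto intro!: holomorphic_intros)
  fix b assume b: "a < b"
  show "bdd_above (range (\<lambda>k. cmod (dz k (\<lambda>z. \<alpha> * f z + \<beta> * g z)) / b ^ k))"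
  proof (rule bdd_aboveI2)
    fix k
    have "cmod (dz k (\<lambda>z. \<alpha> * f z + \<beta> * g z)) \<le> cmod \<alpha> * cmod (dz k f) + cmod \<beta> * cmod (dz k g)"
      unfolding dz_lin[OF Aspace_holo[OF assms(1)] Aspace_holo[OF assms(2)]]
      by (metis norm_mult norm_triangle_ineq)
    also have "\<dots> \<le> cmod \<alpha> * (enorm b f * b^k) + cmod \<beta> * (enorm b g * b^k)"
      using b assms by (intro add_mono mult_left_mono dz_le) auto
    finally show "cmod (dz k (\<lambda>z. \<alpha> * f z + \<beta> * g z)) / b ^ k \<le> cmod \<alpha> * enorm b f + cmod \<beta> * enorm b g"
      using b assms by (simp add: divide_le_eq algebra_simps)
  qed
qed

lemma enorm_lin:
  assumes "f \<in> Aspace a" "g \<in> Aspace a" "a \<ge> 0" "b > a"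
  shows "enorm b (\<lambda>z. \<alpha> * f z + \<beta> * g z) \<le> cmod \<alpha> * enorm b f + cmod \<beta> * enorm b g"
proof (rule enorm_le)
  fix k
  have "cmod (dz k (\<lambda>z. \<alpha> * f z + \<beta> * g z)) \<le> cmod \<alpha> * cmod (dz k f) + cmod \<beta> * cmod (dz k g)"
    unfolding dz_lin[OF Aspace_holo[OF assms(1)] Aspace_holo[OF assms(2)]]
    by (metis norm_mult norm_triangle_ineq)
  also have "\<dots> \<le> cmod \<alpha> * (enorm b f * b^k) + cmod \<beta> * (enorm b g * b^k)"
    using assms by (intro add_mono mult_left_mono dz_le) auto
  finally show "cmod (dz k (\<lambda>z. \<alpha> * f z + \<beta> * g z)) \<le> (cmod \<alpha> * enorm b f + cmod \<beta> * enorm b g) * b^k"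
    by (simp add: algebra_simps)
qed (use assms in auto)

lemma fun_diff_lin: "(g - f) = (\<lambda>z::complex. 1 * g z + (-1) * (f z :: complex))"
  by (rule ext) simp

lemma Aspace_diff: "f \<in> Aspace a \<Longrightarrow> g \<in> Aspace a \<Longrightarrow> a \<ge> 0 \<Longrightarrow> g - f \<in> Aspace a"
  unfolding fun_diff_lin by (rule Aspace_lin)

lemma enorm_add:
  assumes "f \<in> Aspace a" "g \<in> Aspace a" "a \<ge> 0" "b > a"
  shows "enorm b (\<lambda>z. f z + g z) \<le> enorm b f + enorm b g"
  using enorm_lin[OF assms, of 1 1] by simp

lemma enorm_tri:
  assumes "f \<in> Aspace a" "g \<in> Aspace a" "h \<in> Aspace a" "a \<ge> 0" "b > a"
  shows "enorm b (h - f) \<le> enorm b (h - g) + enorm b (g - f)"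
proof -
  have "h - f = (\<lambda>z. (h - g) z + (g - f) z)" by (rule ext) simp
  then show ?thesis using enorm_add[OF Aspace_diff[OF assms(2,3,4)] Aspace_diff[OF assms(1,2,4)] assms(4,5)]
    by simp
qed

lemma enorm_mono:
  assumes "f \<in> Aspace a" "a \<ge> 0" "a < b1" "b1 \<le> b2"
  shows "enorm b2 f \<le> enorm b1 f"
proof (rule enorm_le)
  fix k
  have "norm (dz k f) \<le> enorm b1 f * b1^k" using assms by (intro dz_le) auto
  also have "\<dots> \<le> enorm b1 f * b2^k"
    using assms enorm_nonneg[OF assms(1), of b1] by (intro mult_left_mono power_mono) auto
  finally show "norm (dz k f) \<le> enorm b1 f * b2^k" .
qed (use assms in auto)

lemma enorm_zero: "b > 0 \<Longrightarrow> enorm b (f - f) = 0"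
proof -
  have "f - f = (\<lambda>_. 0)" by (rule ext) simp
  then show ?thesis by (simp add: enorm_def dz_def)
qed

definition "Aopen a U \<longleftrightarrow> U \<subseteq> Aspace a \<and> (\<forall>f\<in>U. \<exists>b>a. \<exists>r>0. {g \<in> Aspace a. enorm b (g - f) < r} \<subseteq> U)"

lemma istop: assumes "a \<ge> 0" shows "istopology (Aopen a)"
  unfolding istopology_def
proof (intro conjI allI impI ballI)
  fix S T assume S: "Aopen a S" and T: "Aopen a T"
  show "Aopen a (S \<inter> T)" unfolding Aopen_def
  proof (intro conjI ballI)
    show "S \<inter> T \<subseteq> Aspace a" using S unfolding Aopen_def by auto
    fix f assume f: "f \<in> S \<inter> T"
    obtain b1 r1 where 1: "b1 > a" "r1 > 0" "{g \<in> Aspace a. enorm b1 (g - f) < r1} \<subseteq> S"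
      using S f unfolding Aopen_def by blast
    obtain b2 r2 where 2: "b2 > a" "r2 > 0" "{g \<in> Aspace a. enorm b2 (g - f) < r2} \<subseteq> T"
      using T f unfolding Aopen_def by blast
    have fA: "f \<in> Aspace a" using f S unfolding Aopen_def by auto
    have "{g \<in> Aspace a. enorm (min b1 b2) (g - f) < min r1 r2} \<subseteq> S \<inter> T"
    proof
      fix g assume g: "g \<in> {g \<in> Aspace a. enorm (min b1 b2) (g - f) < min r1 r2}"
      then have gA: "g \<in> Aspace a" and gl: "enorm (min b1 b2) (g - f) < min r1 r2" by auto
      have d: "g - f \<in> Aspace a" by (rule Aspace_diff[OF fA gA assms])
      have "enorm b1 (g - f) \<le> enorm (min b1 b2) (g - f)"
        by (rule enorm_mono[OF d assms]) (use 1 2 in auto)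
      moreover have "enorm b2 (g - f) \<le> enorm (min b1 b2) (g - f)"
        by (rule enorm_mono[OF d assms]) (use 1 2 in auto)
      ultimately show "g \<in> S \<inter> T" using 1 2 gA gl by auto
    qed
    then show "\<exists>b>a. \<exists>r>0. {g \<in> Aspace a. enorm b (g - f) < r} \<subseteq> S \<inter> T"
      using 1 2 by (intro exI[of _ "min b1 b2"] conjI exI[of _ "min r1 r2"]) auto
  qed
next
  fix K assume K: "\<forall>S\<in>K. Aopen a S"
  show "Aopen a (\<Union>K)" unfolding Aopen_def
  proof (intro conjI ballI)
    show "\<Union> K \<subseteq> Aspace a" using K unfolding Aopen_def by auto
    fix f assume "f \<in> \<Union>K"
    then obtain S where S: "S \<in> K" "f \<in> S" by auto
    then obtain b r where "b > a" "r > 0" "{g \<in> Aspace a. enorm b (g - f) < r} \<subseteq> S"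
      using K unfolding Aopen_def by blast
    then show "\<exists>b>a. \<exists>r>0. {g \<in> Aspace a. enorm b (g - f) < r} \<subseteq> \<Union>K"
      using S by blast
  qed
qed

lemma Atop_eq: "Atop a = topology (Aopen a)"
  by (simp add: Atop_def Aopen_def[abs_def])

lemma openin_Atop: "a \<ge> 0 \<Longrightarrow> openin (Atop a) U \<longleftrightarrow> Aopen a U"
  unfolding Atop_eq by (simp add: istop)

lemma topspace_Atop: assumes "a \<ge> 0" shows "topspace (Atop a) = Aspace a"
proof -
  have "Aopen a (Aspace a)" unfolding Aopen_def
  proof (intro conjI ballI)
    fix f show "\<exists>b>a. \<exists>r>0. {g \<in> Aspace a. enorm b (g - f) < r} \<subseteq> Aspace a"
      by (rule exI[of _ "a+1"]) (auto intro!: exI[of _ "1::real"])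
  qed auto
  then show ?thesis unfolding topspace_def openin_Atop[OF assms] Aopen_def by auto
qed

lemma ball_open:
  assumes "a \<ge> 0" "f \<in> Aspace a" "b > a" "r > 0"
  shows "openin (Atop a) {g \<in> Aspace a. enorm b (g - f) < r}"
  unfolding openin_Atop[OF assms(1)] Aopen_def
proof (intro conjI ballI)
  fix g assume g: "g \<in> {g \<in> Aspace a. enorm b (g - f) < r}"
  show "\<exists>b'>a. \<exists>s>0. {h \<in> Aspace a. enorm b' (h - g) < s} \<subseteq> {g \<in> Aspace a. enorm b (g - f) < r}"
  proof (rule exI[of _ b], intro conjI exI[of _ "r - enorm b (g - f)"])
    show "{h \<in> Aspace a. enorm b (h - g) < r - enorm b (g - f)} \<subseteq> {g \<in> Aspace a. enorm b (g - f) < r}"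
      using enorm_tri[OF assms(2) _ _ assms(1,3), of g] g by fastforce
  qed (use g assms in auto)
qed auto

lemma ball_center:
  assumes "a \<ge> 0" "f \<in> Aspace a" "b > a" "r > 0"
  shows "f \<in> {g \<in> Aspace a. enorm b (g - f) < r}"
  using assms enorm_zero[of b f] by auto

lemma select:
  fixes a b c' :: real
  assumes "a \<ge> 0" "b \<ge> 0" "a * b < 1" "c' > b / (1 - a * b)"
  shows "\<exists>a' b' y. a < a' \<and> b < b' \<and> a' * b' < y \<and> y < 1 \<and> b' / (1 - y) < c'"
proof -
  define Y where "Y t = (a + t) * (b + t) + t" for t :: real
  have l1: "(Y \<longlongrightarrow> a * b) (at_right 0)"
    unfolding Y_def by (rule tendsto_eq_intros refl)+ simp
  have l2: "((\<lambda>t. (b + t) / (1 - Y t)) \<longlongrightarrow> b / (1 - a * b)) (at_right 0)"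
  proof -
    have l0: "((\<lambda>t::real. b + t) \<longlongrightarrow> b + 0) (at_right 0)"
      by (intro tendsto_add tendsto_const tendsto_ident_at)
    show ?thesis
      using tendsto_divide[OF l0 tendsto_diff[OF tendsto_const[of 1] l1]] assms(3) by simp
  qed
  have ev: "\<forall>\<^sub>F t in at_right 0. 0 < t \<and> Y t < 1 \<and> (b + t) / (1 - Y t) < c'"
    using eventually_at_right_less order_tendstoD(2)[OF l1 assms(3)] order_tendstoD(2)[OF l2 assms(4)]
    by eventually_elim auto
  obtain t where t: "0 < t" "Y t < 1" "(b + t) / (1 - Y t) < c'"
    using eventually_happens'[OF _ ev] by auto
  show ?thesis
    by (rule exI[of _ "a + t"], rule exI[of _ "b + t"], rule exI[of _ "Y t"]) (use t in \<open>auto simp: Y_def\<close>)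
qed

lemma mk_setting:
  assumes "\<theta> \<ge> 0" "a \<ge> 0" "b \<ge> 0" "a < a'" "b < b'" "a' * b' < y" "y < 1"
    "\<phi> \<in> Aspace a" "f \<in> Aspace b"
  shows "bsetting \<theta> \<phi> f (enorm a' \<phi>) (enorm b' f) a' b' y (nat \<lceil>\<theta>\<rceil>)"
proof
  show "\<theta> \<le> real (nat \<lceil>\<theta>\<rceil>)" by linarith
  show "0 < y" using assms by (smt (verit) mult_nonneg_nonneg)
  show "0 \<le> enorm a' \<phi>" using assms by (intro enorm_nonneg) auto
  show "0 \<le> enorm b' f" using assms by (intro enorm_nonneg) auto
  fix k show "cmod (dz k \<phi>) \<le> enorm a' \<phi> * a' ^ k" using assms by (intro dz_le) auto
next
  fix m show "cmod (dz m f) \<le> enorm b' f * b' ^ m" using assms by (intro dz_le) auto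
qed (use assms in auto)

definition Kc :: "real \<Rightarrow> real \<Rightarrow> real \<Rightarrow> real \<Rightarrow> real" where "Kc a' b' y \<theta> = (1/(1-y))^(nat \<lceil>\<theta>\<rceil>) / (1 - a' * b' / y)"

lemma main_est:
  assumes "\<theta> \<ge> 0" "a \<ge> 0" "b \<ge> 0" "a < a'" "b < b'" "a' * b' < y" "y < 1"
    "\<phi> \<in> Aspace a" "f \<in> Aspace b"
  shows "(\<forall>z k. summable (\<lambda>m. opterm \<theta> \<phi> f z k m))"
    "(\<forall>z. summable (\<lambda>k. \<Sum>m. opterm \<theta> \<phi> f z k m))"
    "opphi \<theta> \<phi> f holomorphic_on UNIV"
    "\<And>n. norm (dz n (opphi \<theta> \<phi> f)) \<le> enorm a' \<phi> * enorm b' f * Kc a' b' y \<theta> * (b'/(1-y))^n"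
proof -
  interpret S: bsetting \<theta> \<phi> f "enorm a' \<phi>" "enorm b' f" a' b' y "nat \<lceil>\<theta>\<rceil>"
    by (rule mk_setting[OF assms])
  show "(\<forall>z k. summable (\<lambda>m. opterm \<theta> \<phi> f z k m))" using S.opterm_summable by auto
  show "(\<forall>z. summable (\<lambda>k. \<Sum>m. opterm \<theta> \<phi> f z k m))" using S.outer_summable by auto
  show "opphi \<theta> \<phi> f holomorphic_on UNIV" by (rule S.opphi_holo)
  fix n
  show "norm (dz n (opphi \<theta> \<phi> f)) \<le> enorm a' \<phi> * enorm b' f * Kc a' b' y \<theta> * (b'/(1-y))^n"
    using S.dz_opphi_bound[of n] unfolding S.K0_def S.u_def S.v_def Kc_def by (simp add: field_simps)
qed

lemma Kc_nonneg:
  assumes "a' \<ge> 0" "b' \<ge> 0" "a' * b' < y" "y < 1"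
  shows "Kc a' b' y \<theta> \<ge> 0"
proof -
  have y: "y > 0" using assms by (smt (verit) mult_nonneg_nonneg)
  then have "a' * b' / y < 1" using assms by (simp add: divide_less_eq)
  then show ?thesis unfolding Kc_def using assms by (intro divide_nonneg_pos) auto
qed

lemma c_nonneg: "a \<ge> 0 \<Longrightarrow> b \<ge> 0 \<Longrightarrow> a * b < 1 \<Longrightarrow> b / (1 - a * b) \<ge> (0::real)"
  by simp

lemma opphi_summ:
  assumes "\<theta> \<ge> 0" "a \<ge> 0" "b \<ge> 0" "a * b < 1" "\<phi> \<in> Aspace a" "f \<in> Aspace b"
  shows "(\<forall>z k. summable (\<lambda>m. opterm \<theta> \<phi> f z k m))"
    "(\<forall>z. summable (\<lambda>k. \<Sum>m. opterm \<theta> \<phi> f z k m))"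
    "opphi \<theta> \<phi> f holomorphic_on UNIV"
proof -
  obtain a' b' y where s: "a < a'" "b < b'" "a' * b' < y" "y < 1"
    using select[OF assms(2,3,4), of "b / (1 - a * b) + 1"] by auto
  show "(\<forall>z k. summable (\<lambda>m. opterm \<theta> \<phi> f z k m))"
    "(\<forall>z. summable (\<lambda>k. \<Sum>m. opterm \<theta> \<phi> f z k m))"
    "opphi \<theta> \<phi> f holomorphic_on UNIV"
    using main_est[OF assms(1,2,3) s assms(5,6)] by auto
qed

lemma opphi_enorm:
  assumes "\<theta> \<ge> 0" "a \<ge> 0" "b \<ge> 0" "a * b < 1" "c' > b / (1 - a * b)"
  shows "\<exists>a' b' K. a < a' \<and> b < b' \<and> K \<ge> 0 \<and>
     (\<forall>\<phi>\<in>Aspace a. \<forall>f\<in>Aspace b. (\<forall>n. norm (dz n (opphi \<theta> \<phi> f)) \<le> K * enorm a' \<phi> * enorm b' f * c'^n)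
        \<and> enorm c' (opphi \<theta> \<phi> f) \<le> K * enorm a' \<phi> * enorm b' f)"
proof -
  obtain a' b' y where s: "a < a'" "b < b'" "a' * b' < y" "y < 1" "b' / (1 - y) < c'"
    using select[OF assms(2,3,4,5)] by auto
  have c'pos: "c' > 0" using assms c_nonneg[of a b] by linarith
  have K: "Kc a' b' y \<theta> \<ge> 0" using s assms by (intro Kc_nonneg) auto
  have v: "0 \<le> b' / (1 - y)" using s assms by auto
  have "\<forall>\<phi>\<in>Aspace a. \<forall>f\<in>Aspace b. (\<forall>n. norm (dz n (opphi \<theta> \<phi> f)) \<le> Kc a' b' y \<theta> * enorm a' \<phi> * enorm b' f * c'^n)
        \<and> enorm c' (opphi \<theta> \<phi> f) \<le> Kc a' b' y \<theta> * enorm a' \<phi> * enorm b' f"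
  proof (intro ballI)
    fix \<phi> f assume \<phi>: "\<phi> \<in> Aspace a" and f: "f \<in> Aspace b"
    have M: "0 \<le> Kc a' b' y \<theta> * enorm a' \<phi> * enorm b' f"
      using K enorm_nonneg[OF \<phi>, of a'] enorm_nonneg[OF f, of b'] s assms by auto
    have b: "norm (dz n (opphi \<theta> \<phi> f)) \<le> Kc a' b' y \<theta> * enorm a' \<phi> * enorm b' f * c'^n" for n
    proof -
      have "norm (dz n (opphi \<theta> \<phi> f)) \<le> enorm a' \<phi> * enorm b' f * Kc a' b' y \<theta> * (b'/(1-y))^n"
        by (rule main_est(4)[OF assms(1,2,3) s(1-4) \<phi> f])
      also have "\<dots> \<le> enorm a' \<phi> * enorm b' f * Kc a' b' y \<theta> * c'^n"
        using M s v by (intro mult_left_mono power_mono) (auto simp: mult_ac)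
      finally show ?thesis by (simp add: mult_ac)
    qed
    show "(\<forall>n. norm (dz n (opphi \<theta> \<phi> f)) \<le> Kc a' b' y \<theta> * enorm a' \<phi> * enorm b' f * c'^n)
        \<and> enorm c' (opphi \<theta> \<phi> f) \<le> Kc a' b' y \<theta> * enorm a' \<phi> * enorm b' f"
      using b by (auto intro!: enorm_le c'pos)
  qed
  then show ?thesis using s K by blast
qed

lemma opphi_in:
  assumes "\<theta> \<ge> 0" "a \<ge> 0" "b \<ge> 0" "a * b < 1" "\<phi> \<in> Aspace a" "f \<in> Aspace b"
  shows "opphi \<theta> \<phi> f \<in> Aspace (b / (1 - a * b))"
  unfolding Aspace_def
proof (intro CollectI conjI allI impI)
  show "opphi \<theta> \<phi> f holomorphic_on UNIV" by (rule opphi_summ(3)[OF assms])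
  fix c' assume c': "b / (1 - a * b) < c'"
  then obtain a' b' K where K: "K \<ge> 0" and
    bd: "\<And>n. norm (dz n (opphi \<theta> \<phi> f)) \<le> K * enorm a' \<phi> * enorm b' f * c'^n"
    using opphi_enorm[OF assms(1-4) c'] assms(5,6) by blast
  have c'pos: "c' > 0" using assms c_nonneg[of a b] c' by linarith
  show "bdd_above (range (\<lambda>k. cmod (dz k (opphi \<theta> \<phi> f)) / c' ^ k))"
    by (rule bdd_aboveI2[where M="K * enorm a' \<phi> * enorm b' f"]) (use bd c'pos in \<open>simp add: divide_le_eq\<close>)
qed

lemma sum_lin:
  fixes X Y :: "nat \<Rightarrow> complex"
  assumes "summable X" "summable Y"
  shows "(\<Sum>n. \<alpha> * X n + \<beta> * Y n) = \<alpha> * suminf X + \<beta> * suminf Y"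
  using assms by (simp add: suminf_add[symmetric] suminf_mult summable_mult)

lemma lin_phi:
  assumes "\<theta> \<ge> 0" "a \<ge> 0" "b \<ge> 0" "a * b < 1" "\<phi>1 \<in> Aspace a" "\<phi>2 \<in> Aspace a" "f \<in> Aspace b"
  shows "opphi \<theta> (\<lambda>z. \<alpha> * \<phi>1 z + \<beta> * \<phi>2 z) f = (\<lambda>z. \<alpha> * opphi \<theta> \<phi>1 f z + \<beta> * opphi \<theta> \<phi>2 f z)"
proof
  fix z
  have t: "opterm \<theta> (\<lambda>z. \<alpha> * \<phi>1 z + \<beta> * \<phi>2 z) f z k m = \<alpha> * opterm \<theta> \<phi>1 f z k m + \<beta> * opterm \<theta> \<phi>2 f z k m" for k m
    unfolding opterm_def dz_lin[OF Aspace_holo[OF assms(5)] Aspace_holo[OF assms(6)]]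
    by (simp add: algebra_simps add_divide_distrib)
  have s1: "\<forall>z k. summable (\<lambda>m. opterm \<theta> \<phi>1 f z k m)" "\<forall>z. summable (\<lambda>k. \<Sum>m. opterm \<theta> \<phi>1 f z k m)"
    using opphi_summ[OF assms(1-4,5,7)] by auto
  have s2: "\<forall>z k. summable (\<lambda>m. opterm \<theta> \<phi>2 f z k m)" "\<forall>z. summable (\<lambda>k. \<Sum>m. opterm \<theta> \<phi>2 f z k m)"
    using opphi_summ[OF assms(1-4,6,7)] by auto
  show "opphi \<theta> (\<lambda>z. \<alpha> * \<phi>1 z + \<beta> * \<phi>2 z) f z = \<alpha> * opphi \<theta> \<phi>1 f z + \<beta> * opphi \<theta> \<phi>2 f z"
    unfolding opphi_def t using s1 s2 by (simp add: sum_lin)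
qed

lemma lin_f:
  assumes "\<theta> \<ge> 0" "a \<ge> 0" "b \<ge> 0" "a * b < 1" "\<phi> \<in> Aspace a" "f1 \<in> Aspace b" "f2 \<in> Aspace b"
  shows "opphi \<theta> \<phi> (\<lambda>z. \<alpha> * f1 z + \<beta> * f2 z) = (\<lambda>z. \<alpha> * opphi \<theta> \<phi> f1 z + \<beta> * opphi \<theta> \<phi> f2 z)"
proof
  fix z
  have t: "opterm \<theta> \<phi> (\<lambda>z. \<alpha> * f1 z + \<beta> * f2 z) z k m = \<alpha> * opterm \<theta> \<phi> f1 z k m + \<beta> * opterm \<theta> \<phi> f2 z k m" for k m
    unfolding opterm_def dz_lin[OF Aspace_holo[OF assms(6)] Aspace_holo[OF assms(7)]]
    by (simp add: algebra_simps add_divide_distrib)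
  have s1: "\<forall>z k. summable (\<lambda>m. opterm \<theta> \<phi> f1 z k m)" "\<forall>z. summable (\<lambda>k. \<Sum>m. opterm \<theta> \<phi> f1 z k m)"
    using opphi_summ[OF assms(1-4,5,6)] by auto
  have s2: "\<forall>z k. summable (\<lambda>m. opterm \<theta> \<phi> f2 z k m)" "\<forall>z. summable (\<lambda>k. \<Sum>m. opterm \<theta> \<phi> f2 z k m)"
    using opphi_summ[OF assms(1-4,5,7)] by auto
  show "opphi \<theta> \<phi> (\<lambda>z. \<alpha> * f1 z + \<beta> * f2 z) z = \<alpha> * opphi \<theta> \<phi> f1 z + \<beta> * opphi \<theta> \<phi> f2 z"
    unfolding opphi_def t using s1 s2 by (simp add: sum_lin)
qed

lemma opphi_cont:
  assumes th: "\<theta> \<ge> 0" and ab: "a \<ge> 0" "b \<ge> 0" "a * b < 1"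
  defines "c \<equiv> b / (1 - a * b)"
  shows "continuous_map (prod_topology (Atop a) (Atop b)) (Atop c) (\<lambda>(\<phi>, f). opphi \<theta> \<phi> f)"
proof -
  have c0: "c \<ge> 0" unfolding c_def using ab by simp
  have inA: "opphi \<theta> \<phi> f \<in> Aspace c" if "\<phi> \<in> Aspace a" "f \<in> Aspace b" for \<phi> f
    unfolding c_def by (rule opphi_in[OF th ab that])
  show ?thesis
    unfolding continuous_map_def topspace_prod_topology topspace_Atop[OF ab(1)] topspace_Atop[OF ab(2)]
      topspace_Atop[OF c0]
  proof (intro conjI allI impI)
    show "(\<lambda>(\<phi>, f). opphi \<theta> \<phi> f) \<in> Aspace a \<times> Aspace b \<rightarrow> Aspace c" using inA by auto
    fix U assume U: "openin (Atop c) U"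
    show "openin (prod_topology (Atop a) (Atop b)) {x \<in> Aspace a \<times> Aspace b. (case x of (\<phi>, f) \<Rightarrow> opphi \<theta> \<phi> f) \<in> U}"
      unfolding openin_prod_topology_alt
    proof (intro allI impI)
      fix \<phi>0 f0 assume x0: "(\<phi>0, f0) \<in> {x \<in> Aspace a \<times> Aspace b. (case x of (\<phi>, f) \<Rightarrow> opphi \<theta> \<phi> f) \<in> U}"
      then have \<phi>0: "\<phi>0 \<in> Aspace a" and f0: "f0 \<in> Aspace b" and F0: "opphi \<theta> \<phi>0 f0 \<in> U" by auto
      obtain c' r where c': "c' > c" "r > 0" and ball: "{g \<in> Aspace c. enorm c' (g - opphi \<theta> \<phi>0 f0) < r} \<subseteq> U"
        using U F0 unfolding openin_Atop[OF c0] Aopen_def by blast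
      obtain a' b' K where s: "a < a'" "b < b'" "K \<ge> 0" and
        est: "\<And>\<phi> f. \<phi> \<in> Aspace a \<Longrightarrow> f \<in> Aspace b \<Longrightarrow> enorm c' (opphi \<theta> \<phi> f) \<le> K * enorm a' \<phi> * enorm b' f"
        using opphi_enorm[OF th ab, of c'] c' unfolding c_def by blast
      define N\<phi> where "N\<phi> = enorm a' \<phi>0"
      define Nf where "Nf = enorm b' f0"
      have N: "N\<phi> \<ge> 0" "Nf \<ge> 0" unfolding N\<phi>_def Nf_def using \<phi>0 f0 s ab by (auto intro!: enorm_nonneg)
      define M where "M = K * (Nf + 1 + N\<phi>)"
      have M: "M \<ge> 0" unfolding M_def using N s by auto
      define \<delta> where "\<delta> = min 1 (r / (2 * M + 1))"
      have \<delta>: "\<delta> > 0" "\<delta> \<le> 1" "\<delta> * M < r"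
      proof -
        show "\<delta> > 0" "\<delta> \<le> 1" unfolding \<delta>_def using c' M by auto
        have "\<delta> \<le> r / (2 * M + 1)" unfolding \<delta>_def by simp
        then have "\<delta> * (2 * M + 1) \<le> r" using M by (simp add: le_divide_eq)
        moreover have "\<delta> * (2 * M + 1) = 2 * (\<delta> * M) + \<delta>" by (simp add: algebra_simps)
        moreover have "\<delta> * M \<ge> 0" using \<open>\<delta> > 0\<close> M by simp
        ultimately show "\<delta> * M < r" using \<open>\<delta> > 0\<close> by linarith
      qed
      define U1 where "U1 = {g \<in> Aspace a. enorm a' (g - \<phi>0) < \<delta>}"
      define V1 where "V1 = {g \<in> Aspace b. enorm b' (g - f0) < \<delta>}"
      show "\<exists>U' V'. openin (Atop a) U' \<and> openin (Atop b) V' \<and> \<phi>0 \<in> U' \<and> f0 \<in> V' \<and>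
             U' \<times> V' \<subseteq> {x \<in> Aspace a \<times> Aspace b. (case x of (\<phi>, f) \<Rightarrow> opphi \<theta> \<phi> f) \<in> U}"
      proof (rule exI[of _ U1], rule exI[of _ V1], intro conjI)
        show "openin (Atop a) U1" unfolding U1_def by (rule ball_open[OF ab(1) \<phi>0 s(1) \<delta>(1)])
        show "openin (Atop b) V1" unfolding V1_def by (rule ball_open[OF ab(2) f0 s(2) \<delta>(1)])
        show "\<phi>0 \<in> U1" unfolding U1_def by (rule ball_center[OF ab(1) \<phi>0 s(1) \<delta>(1)])
        show "f0 \<in> V1" unfolding V1_def by (rule ball_center[OF ab(2) f0 s(2) \<delta>(1)])
        show "U1 \<times> V1 \<subseteq> {x \<in> Aspace a \<times> Aspace b. (case x of (\<phi>, f) \<Rightarrow> opphi \<theta> \<phi> f) \<in> U}"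
        proof
          fix x assume "x \<in> U1 \<times> V1"
          then obtain \<phi> f where x: "x = (\<phi>, f)" and \<phi>U: "\<phi> \<in> U1" and fV: "f \<in> V1" by auto
          from \<phi>U fV have \<phi>: "\<phi> \<in> Aspace a" and f: "f \<in> Aspace b"
            and e1: "enorm a' (\<phi> - \<phi>0) < \<delta>" and e2: "enorm b' (f - f0) < \<delta>"
            unfolding U1_def V1_def by auto
          have d\<phi>: "\<phi> - \<phi>0 \<in> Aspace a" by (rule Aspace_diff[OF \<phi>0 \<phi> ab(1)])
          have df: "f - f0 \<in> Aspace b" by (rule Aspace_diff[OF f0 f ab(2)])
          have e1p: "enorm a' (\<phi> - \<phi>0) \<ge> 0" using d\<phi> s ab by (intro enorm_nonneg) auto
          have e2p: "enorm b' (f - f0) \<ge> 0" using df s ab by (intro enorm_nonneg) auto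
          have eq\<phi>: "(\<lambda>z. 1 * (\<phi> - \<phi>0) z + 1 * \<phi>0 z) = \<phi>" by (rule ext) simp
          have eqf: "(\<lambda>z. 1 * (f - f0) z + 1 * f0 z) = f" by (rule ext) simp
          have L1: "opphi \<theta> \<phi> f = (\<lambda>z. opphi \<theta> (\<phi> - \<phi>0) f z + opphi \<theta> \<phi>0 f z)"
            using lin_phi[OF th ab d\<phi> \<phi>0 f, of 1 1] unfolding eq\<phi> by simp
          have L2: "opphi \<theta> \<phi>0 f = (\<lambda>z. opphi \<theta> \<phi>0 (f - f0) z + opphi \<theta> \<phi>0 f0 z)"
            using lin_f[OF th ab \<phi>0 df f0, of 1 1] unfolding eqf by simp
          have D: "opphi \<theta> \<phi> f - opphi \<theta> \<phi>0 f0 = (\<lambda>z. opphi \<theta> (\<phi> - \<phi>0) f z + opphi \<theta> \<phi>0 (f - f0) z)"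
            by (rule ext) (subst L1, subst L2, simp)
          have "enorm c' (opphi \<theta> \<phi> f - opphi \<theta> \<phi>0 f0)
              \<le> enorm c' (opphi \<theta> (\<phi> - \<phi>0) f) + enorm c' (opphi \<theta> \<phi>0 (f - f0))"
            unfolding D by (rule enorm_add[OF inA[OF d\<phi> f] inA[OF \<phi>0 df] c0 c'(1)])
          also have "\<dots> \<le> K * enorm a' (\<phi> - \<phi>0) * enorm b' f + K * N\<phi> * enorm b' (f - f0)"
            unfolding N\<phi>_def by (intro add_mono est d\<phi> f \<phi>0 df)
          also have "\<dots> \<le> K * \<delta> * (Nf + 1) + K * N\<phi> * \<delta>"
          proof (intro add_mono)
            have "enorm b' f \<le> Nf + enorm b' (f - f0)"
            proof -
              have "f = (\<lambda>z. f0 z + (f - f0) z)" by (rule ext) simp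
              then have "enorm b' f = enorm b' (\<lambda>z. f0 z + (f - f0) z)" by simp
              also have "\<dots> \<le> Nf + enorm b' (f - f0)"
                unfolding Nf_def by (rule enorm_add[OF f0 df ab(2) s(2)])
              finally show ?thesis .
            qed
            then have "enorm b' f \<le> Nf + 1" using e2 \<delta> by linarith
            then show "K * enorm a' (\<phi> - \<phi>0) * enorm b' f \<le> K * \<delta> * (Nf + 1)"
              using e1 e1p s(3) f s ab by (intro mult_mono) (auto intro: enorm_nonneg mult_left_mono)
            show "K * N\<phi> * enorm b' (f - f0) \<le> K * N\<phi> * \<delta>"
              using e2 s(3) N by (intro mult_left_mono) auto
          qed
          also have "\<dots> = \<delta> * M" unfolding M_def by (simp add: algebra_simps)
          also have "\<dots> < r" by (rule \<delta>(3))
          finally have "enorm c' (opphi \<theta> \<phi> f - opphi \<theta> \<phi>0 f0) < r" .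
          then show "x \<in> {x \<in> Aspace a \<times> Aspace b. (case x of (\<phi>, f) \<Rightarrow> opphi \<theta> \<phi> f) \<in> U}"
            using ball inA[OF \<phi> f] \<phi> f x by auto
        qed
      qed
    qed
  qed
qed

theorem corollary1p6:
  fixes \<theta> a b :: real
  assumes "\<theta> \<ge> 0" and "a \<ge> 0" and "b \<ge> 0" and "a * b < 1"
  defines "c \<equiv> b / (1 - a * b)"
  shows "(\<forall>\<phi>\<in>Aspace a. \<forall>f\<in>Aspace b. \<forall>z.
            (\<forall>k. summable (\<lambda>m. opterm \<theta> \<phi> f z k m)) \<and>
            summable (\<lambda>k. \<Sum>m. opterm \<theta> \<phi> f z k m))
       \<and> (\<forall>\<phi>\<in>Aspace a. \<forall>f\<in>Aspace b. opphi \<theta> \<phi> f \<in> Aspace c)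
       \<and> (\<forall>\<phi>1\<in>Aspace a. \<forall>\<phi>2\<in>Aspace a. \<forall>f\<in>Aspace b. \<forall>\<alpha> \<beta> :: complex.
            opphi \<theta> (\<lambda>z. \<alpha> * \<phi>1 z + \<beta> * \<phi>2 z) f
              = (\<lambda>z. \<alpha> * opphi \<theta> \<phi>1 f z + \<beta> * opphi \<theta> \<phi>2 f z))
       \<and> (\<forall>\<phi>\<in>Aspace a. \<forall>f1\<in>Aspace b. \<forall>f2\<in>Aspace b. \<forall>\<alpha> \<beta> :: complex.
            opphi \<theta> \<phi> (\<lambda>z. \<alpha> * f1 z + \<beta> * f2 z)
              = (\<lambda>z. \<alpha> * opphi \<theta> \<phi> f1 z + \<beta> * opphi \<theta> \<phi> f2 z))
       \<and> continuous_map (prod_topology (Atop a) (Atop b)) (Atop c)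
            (\<lambda>(\<phi>, f). opphi \<theta> \<phi> f)"
proof (intro conjI)
  show "\<forall>\<phi>\<in>Aspace a. \<forall>f\<in>Aspace b. \<forall>z.
            (\<forall>k. summable (\<lambda>m. opterm \<theta> \<phi> f z k m)) \<and>
            summable (\<lambda>k. \<Sum>m. opterm \<theta> \<phi> f z k m)"
    using opphi_summ[OF assms(1-4)] by blast
  show "\<forall>\<phi>\<in>Aspace a. \<forall>f\<in>Aspace b. opphi \<theta> \<phi> f \<in> Aspace c"
    unfolding c_def using opphi_in[OF assms(1-4)] by blast
  show "\<forall>\<phi>1\<in>Aspace a. \<forall>\<phi>2\<in>Aspace a. \<forall>f\<in>Aspace b. \<forall>\<alpha> \<beta> :: complex.
            opphi \<theta> (\<lambda>z. \<alpha> * \<phi>1 z + \<beta> * \<phi>2 z) f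
              = (\<lambda>z. \<alpha> * opphi \<theta> \<phi>1 f z + \<beta> * opphi \<theta> \<phi>2 f z)"
    using lin_phi[OF assms(1-4)] by blast
  show "\<forall>\<phi>\<in>Aspace a. \<forall>f1\<in>Aspace b. \<forall>f2\<in>Aspace b. \<forall>\<alpha> \<beta> :: complex.
            opphi \<theta> \<phi> (\<lambda>z. \<alpha> * f1 z + \<beta> * f2 z)
              = (\<lambda>z. \<alpha> * opphi \<theta> \<phi> f1 z + \<beta> * opphi \<theta> \<phi> f2 z)"
    using lin_f[OF assms(1-4)] by blast
  show "continuous_map (prod_topology (Atop a) (Atop b)) (Atop c) (\<lambda>(\<phi>, f). opphi \<theta> \<phi> f)"
    unfolding c_def by (rule opphi_cont[OF assms(1-4)])
qed

end
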